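(* Let $d, t$ be integers with $d \geq t-1$ and $t \geq 4$. Then \[ \mathrm{rb}(W_d, F_t) \ge \left\lfloor \frac{2t-5}{t-2}\, d \right\rfloor + 1, \] i.e., there is an edge-coloring of $W_d$ with exactly $\left\lfloor \frac{2t-5}{t-2} d \right\rfloor$ colors containing no rainbow subgraph isomorphic to $F_t$.
   Context: A subgraph of an edge-colored graph is rainbow if no two of its edges have the same color. For graphs $G$ and $H$, the rainbow number $\mathrm{rb}(G,H)$ is the minimum integer $k$ such that every edge-coloring of $G$ that uses at least $k$ distinct colors contains a rainbow subgraph isomorphic to $H$. $W_d$ is the wheel: a hub vertex adjacent to all vertices of a cycle $v_1\cdots v_dv_1$. The fan $F_t$ is obtained from a cycle $v_1v_2\cdots v_tv_1$ by adding all chords $v_1v_i$, $3 \le i \le t-1$. *)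

theory Defs
  imports Complex_Main
begin

text \<open>Simple graphs are given by a vertex set and a set of edges, each edge being a
two-element set of vertices. Vertices are natural numbers.\<close>

definition wheel_V :: "nat \<Rightarrow> nat set" where
  "wheel_V d = {0..d}"

definition wheel_E :: "nat \<Rightarrow> nat set set" where
  "wheel_E d = {{0, i} | i. 1 \<le> i \<and> i \<le> d} \<union> {{i, i mod d + 1} | i. 1 \<le> i \<and> i \<le> d}"

definition fan_V :: "nat \<Rightarrow> nat set" where
  "fan_V t = {1..t}"

definition fan_E :: "nat \<Rightarrow> nat set set" where
  "fan_E t = {{i, i mod t + 1} | i. 1 \<le> i \<and> i \<le> t} \<union> {{1, i} | i. 3 \<le> i \<and> i \<le> t - 1}"

definition has_rainbow_copy ::
  "nat set \<Rightarrow> nat set set \<Rightarrow> (nat set \<Rightarrow> 'c) \<Rightarrow> nat set \<Rightarrow> nat set set \<Rightarrow> bool" where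
  "has_rainbow_copy VG EG c VH EH \<longleftrightarrow>
     (\<exists>f. inj_on f VH \<and> f ` VH \<subseteq> VG \<and> (\<forall>e\<in>EH. f ` e \<in> EG)
          \<and> inj_on (\<lambda>e. c (f ` e)) EH)"

definition rb :: "nat set \<Rightarrow> nat set set \<Rightarrow> nat set \<Rightarrow> nat set set \<Rightarrow> nat" where
  "rb VG EG VH EH = (LEAST k. \<forall>c :: nat set \<Rightarrow> nat.
       card (c ` EG) \<ge> k \<longrightarrow> has_rainbow_copy VG EG c VH EH)"

end

theory Submission
  imports Defs
begin

definition gfun :: "nat \<Rightarrow> nat \<Rightarrow> nat \<Rightarrow> nat" where
  "gfun p d j = min ((p - (j-1) mod p) mod p) (d+1-j)"

lemma g_le:
  assumes "p > 0" shows "gfun p d j \<le> p - 1"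
proof -
  have "(p - (j-1) mod p) mod p < p" using assms by (rule mod_less_divisor)
  then have "(p - (j-1) mod p) mod p \<le> p - 1" by linarith
  then show ?thesis unfolding gfun_def by (rule min.coboundedI1)
qed

lemma g_step:
  assumes "p > 0" "1 \<le> j" "j \<le> d" "(j-1) mod p \<noteq> 0"
  shows "gfun p d (j mod d + 1) + 1 = gfun p d j"
proof (cases "j < d")
  case True
  define x where "x = (j-1) mod p"
  have x: "x < p" "x \<noteq> 0" using assms x_def by auto
  have jm: "j mod p = (x+1) mod p"
  proof -
    have "j mod p = ((j-1) + 1) mod p" using assms by simp
    also have "\<dots> = ((j-1) mod p + 1) mod p" by (rule mod_add_left_eq[symmetric])
    finally show ?thesis unfolding x_def .
  qed
  have sj: "j mod d + 1 = j + 1" using True by simp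
  have g1: "gfun p d (j mod d + 1) = min ((p - j mod p) mod p) (d - j)"
    unfolding sj gfun_def by simp
  have g2: "gfun p d j = min ((p - x) mod p) (d + 1 - j)"
    unfolding gfun_def x_def by simp
  have px: "(p - x) mod p = p - x" using x by simp
  show ?thesis
  proof (cases "x + 1 = p")
    case True
    then have "j mod p = 0" using jm by simp
    then have "gfun p d (j mod d + 1) = 0" using g1 by simp
    moreover have "gfun p d j = 1" using g2 px True \<open>j < d\<close> by simp
    ultimately show ?thesis by simp
  next
    case False
    then have "j mod p = x + 1" using jm x by simp
    then have "(p - j mod p) mod p = p - x - 1" using x False by simp
    then have "gfun p d (j mod d + 1) = min (p - x - 1) (d - j)" using g1 by simp
    moreover have "gfun p d j = min (p - x) (d + 1 - j)" using g2 px by simp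
    moreover have "min (p - x - 1) (d - j) + 1 = min (p - x) (d + 1 - j)"
    proof (cases "p - x \<le> d + 1 - j")
      case True
      then have "p - x - 1 \<le> d - j" by linarith
      then show ?thesis using True x by (simp add: min_def)
    next
      case False
      then have "\<not> p - x - 1 \<le> d - j" using x \<open>j < d\<close> by linarith
      then show ?thesis using False \<open>j < d\<close> by (simp add: min_def)
    qed
    ultimately show ?thesis by simp
  qed
next
  case False
  then have "j = d" using assms by auto
  obtain x where x: "x = (d-1) mod p" by blast
  have "x < p" "x > 0" using x assms \<open>j = d\<close> by auto
  have e1: "gfun p d d = min ((p - x) mod p) 1" using assms by (simp add: gfun_def x)
  have e2: "(p - x) mod p = p - x" using \<open>x < p\<close> \<open>x > 0\<close> by simp
  have e3: "gfun p d (d mod d + 1) = 0" by (simp add: gfun_def)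
  show ?thesis using e1 e2 e3 \<open>x < p\<close> \<open>j = d\<close> by simp
qed

lemma glemma:
  assumes p: "p > 0" and fin: "finite R" and R: "R \<subseteq> {1..d}" and KR: "K \<subseteq> R"
    and sK: "(\<lambda>j. j mod d + 1) ` K \<subseteq> R" and cR: "card R \<le> card K + 1"
    and cK: "card K \<ge> p" and unm: "\<forall>j\<in>K. (j-1) mod p \<noteq> 0"
  shows False
proof -
  let ?s = "\<lambda>j. j mod d + 1"
  let ?g = "gfun p d"
  have inj: "inj_on ?s K"
  proof (rule inj_onI)
    fix x y assume "x \<in> K" "y \<in> K" "?s x = ?s y"
    then have "x \<in> {1..d}" "y \<in> {1..d}" using KR R by auto
    moreover have "x mod d = (if x = d then 0 else x)" "y mod d = (if y = d then 0 else y)"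
      using \<open>x \<in> {1..d}\<close> \<open>y \<in> {1..d}\<close> by auto
    ultimately show "x = y" using \<open>?s x = ?s y\<close> by (auto split: if_splits)
  qed
  have finK: "finite K" using fin KR finite_subset by blast
  have s1: "sum ?g (?s ` K) = sum (\<lambda>j. ?g (?s j)) K"
    using sum.reindex[OF inj] by simp
  have s2: "sum (\<lambda>j. ?g (?s j)) K + card K = sum ?g K"
  proof -
    have "sum (\<lambda>j. ?g (?s j) + 1) K = sum (\<lambda>j. ?g (?s j)) K + sum (\<lambda>j. 1) K"
      by (rule sum.distrib)
    then have "sum (\<lambda>j. ?g (?s j)) K + card K = sum (\<lambda>j. ?g (?s j) + 1) K"
      by simp
    also have "\<dots> = sum ?g K"
    proof (rule sum.cong[OF refl])
      fix j assume "j \<in> K"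
      then have "1 \<le> j" "j \<le> d" "(j-1) mod p \<noteq> 0" using unm KR R by auto
      then show "?g (?s j) + 1 = ?g j" by (rule g_step[OF p])
    qed
    finally show ?thesis .
  qed
  have s3: "sum ?g R = sum ?g (?s ` K) + sum ?g (R - ?s ` K)"
    using sum.subset_diff[OF sK fin, of ?g] by linarith
  have s4: "sum ?g K \<le> sum ?g R"
    by (rule sum_mono2[OF fin KR]) simp
  have cs: "card (?s ` K) = card K" using card_image[OF inj] .
  have c5: "card (R - ?s ` K) \<le> 1"
  proof -
    have fsK: "finite (?s ` K)" using finK by simp
    show ?thesis using card_Diff_subset[OF fsK sK] cs cR by linarith
  qed
  have s6: "sum ?g (R - ?s ` K) \<le> card (R - ?s ` K) * (p - 1)"
    using sum_bounded_above[of "R - ?s ` K" ?g "p-1"] g_le[OF p] by simp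
  also have "\<dots> \<le> p - 1" using c5 by (simp add: mult_le_cancel2)
  finally have "sum ?g (R - ?s ` K) \<le> p - 1" .
  then have "card K \<le> p - 1" using s1 s2 s3 s4 by linarith
  then show False using cK p by linarith
qed
definition rimcol :: "nat \<Rightarrow> nat \<Rightarrow> nat \<Rightarrow> nat" where
  "rimcol p d j = (if (j-1) mod p = 0 then j else d + j)"

definition col :: "nat \<Rightarrow> nat \<Rightarrow> nat set \<Rightarrow> nat" where
  "col p d e = (if 0 \<in> e then Max e else if e = {1,d} then rimcol p d d else rimcol p d (Min e))"

lemma col_spoke: "1 \<le> i \<Longrightarrow> col p d {0,i} = i"
  unfolding col_def by simp

lemma col_rim:
  assumes "d \<ge> 3" "1 \<le> j" "j \<le> d"
  shows "col p d {j, j mod d + 1} = rimcol p d j"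
proof (cases "j = d")
  case True
  then have "{j, j mod d + 1} = {1,d}" by auto
  then show ?thesis using True assms unfolding col_def by auto
next
  case False
  then have jd: "j mod d + 1 = j + 1" using assms by simp
  have "{j, j+1} \<noteq> {1,d}" using assms by (auto simp: doubleton_eq_iff)
  then show ?thesis using assms unfolding col_def jd by auto
qed

lemma fan_cyc: "1 \<le> i \<Longrightarrow> i \<le> t \<Longrightarrow> {i, i mod t + 1} \<in> fan_E t"
  unfolding fan_E_def by (rule UnI1, rule CollectI, rule exI[of _ i]) simp

lemma fan_chord: "3 \<le> i \<Longrightarrow> i \<le> t - 1 \<Longrightarrow> {1, i} \<in> fan_E t"
  unfolding fan_E_def by (rule UnI2, rule CollectI, rule exI[of _ i]) simp

lemma wheel_spoke: "1 \<le> i \<Longrightarrow> i \<le> d \<Longrightarrow> {0, i} \<in> wheel_E d"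
  unfolding wheel_E_def by (rule UnI1, rule CollectI, rule exI[of _ i]) simp

lemma wheel_rim: "1 \<le> i \<Longrightarrow> i \<le> d \<Longrightarrow> {i, i mod d + 1} \<in> wheel_E d"
  unfolding wheel_E_def by (rule UnI2, rule CollectI, rule exI[of _ i]) simp

lemma wheel_cases:
  assumes "s \<in> wheel_E d"
  obtains i where "1 \<le> i" "i \<le> d" "s = {0,i}" | i where "1 \<le> i" "i \<le> d" "s = {i, i mod d + 1}"
  using assms unfolding wheel_E_def by auto

lemma wheel_fin: "finite (wheel_E d)"
proof -
  have "wheel_E d \<subseteq> Pow {0..d}" unfolding wheel_E_def
    by (auto simp: Suc_le_eq)
  then show ?thesis by (rule finite_subset) simp
qed

lemma card_marked:
  assumes "p > 0"
  shows "card {j\<in>{1..d}. (j-1) mod p = 0} \<le> (d-1) div p + 1"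
proof -
  have "{j\<in>{1..d}. (j-1) mod p = 0} \<subseteq> (\<lambda>k. k*p+1) ` {..(d-1) div p}"
  proof
    fix j assume j: "j \<in> {j\<in>{1..d}. (j-1) mod p = 0}"
    then have "j - 1 = ((j-1) div p) * p" using div_mult_mod_eq[of "j-1" p] by simp
    moreover have "(j-1) div p \<le> (d-1) div p" using j by (auto intro: div_le_mono)
    ultimately show "j \<in> (\<lambda>k. k*p+1) ` {..(d-1) div p}" using j
      by (metis (no_types, lifting) One_nat_def Suc_pred atLeastAtMost_iff atMost_iff
          image_eqI le_add_diff_inverse2 mem_Collect_eq)
  qed
  then have "card {j\<in>{1..d}. (j-1) mod p = 0} \<le> card ((\<lambda>k. k*p+1) ` {..(d-1) div p})"
    by (rule card_mono[rotated]) simp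
  also have "\<dots> \<le> card {..(d-1) div p}" by (rule card_image_le) simp
  finally show ?thesis by simp
qed

lemma arith_bound:
  fixes p d :: nat
  assumes "p \<ge> 2" "d \<ge> 1"
  shows "((2*p-1)*d) div p + ((d-1) div p + 1) \<le> 2*d"
proof -
  define q where "q = (d-1) div p"
  have qp: "q * p \<le> d - 1" unfolding q_def using div_mult_mod_eq[of "d-1" p] by linarith
  have q2: "q \<le> d - 1" unfolding q_def by simp
  have e1: "(2*p-1)*d = 2*(d*p) - d" by (simp add: diff_mult_distrib algebra_simps)
  have e2: "(2*d-q)*p = 2*(d*p) - q*p" by (simp add: diff_mult_distrib algebra_simps)
  have dp: "d * p \<ge> d" using assms by simp
  have "(2*p-1)*d < (2*d-q)*p" unfolding e1 e2 using qp dp assms by linarith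
  then have "((2*p-1)*d) div p < 2*d-q" by (rule less_mult_imp_div_less)
  then show ?thesis unfolding q_def[symmetric] using q2 by linarith
qed

lemma floor_eq:
  assumes "t \<ge> 4"
  shows "nat \<lfloor>(real (2 * t - 5) / real (t - 2)) * real d\<rfloor> = ((2*(t-2)-1)*d) div (t-2)"
proof -
  have "2*t-5 = 2*(t-2)-1" using assms by simp
  then have "(real (2 * t - 5) / real (t - 2)) * real d = real ((2*(t-2)-1)*d) / real (t-2)"
    by simp
  then show ?thesis by (simp only: floor_divide_of_nat_eq) simp
qed

lemma fan_card:
  assumes "t \<ge> 4"
  shows "finite (fan_E t)" "card (fan_E t) \<ge> 2*t-3" "\<forall>e\<in>fan_E t. e \<subseteq> {1..t}"
proof -
  show sub: "\<forall>e\<in>fan_E t. e \<subseteq> {1..t}" unfolding fan_E_def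
    using assms by (auto simp: Suc_le_eq)
  then have "fan_E t \<subseteq> Pow {1..t}" by auto
  then show fin: "finite (fan_E t)" by (rule finite_subset) simp
  define E1 where "E1 = (\<lambda>i. {1,i}) ` {2..t}"
  define E2 where "E2 = (\<lambda>i. {i,i+1}) ` {2..t-1}"
  have E1s: "E1 \<subseteq> fan_E t"
  proof
    fix e assume "e \<in> E1"
    then obtain i where i: "2 \<le> i" "i \<le> t" "e = {1,i}" unfolding E1_def by auto
    show "e \<in> fan_E t"
    proof -
      consider "i = 2" | "i = t" | "3 \<le> i \<and> i \<le> t - 1" using i by linarith
      then show ?thesis
      proof cases
        case 1
        have "{1, 1 mod t + 1} \<in> fan_E t" using assms by (intro fan_cyc) auto
        then have "{1::nat, 2} \<in> fan_E t" using assms by (simp add: numeral_2_eq_2)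
        then show ?thesis using 1 i by simp
      next
        case 2
        have "{t, t mod t + 1} \<in> fan_E t" using assms by (intro fan_cyc) auto
        then show ?thesis using 2 i by (simp add: insert_commute)
      next
        case 3
        then show ?thesis using i fan_chord by blast
      qed
    qed
  qed
  have E2s: "E2 \<subseteq> fan_E t"
  proof
    fix e assume "e \<in> E2"
    then obtain i where i: "2 \<le> i" "i \<le> t - 1" "e = {i,i+1}" unfolding E2_def by auto
    have "{i, i mod t + 1} \<in> fan_E t" using i assms by (intro fan_cyc) auto
    then show "e \<in> fan_E t" using i assms by simp
  qed
  have c1: "card E1 = t - 1" unfolding E1_def
    by (subst card_image) (auto simp: inj_on_def doubleton_eq_iff)
  have c2: "card E2 = t - 2" unfolding E2_def
    by (subst card_image) (auto simp: inj_on_def doubleton_eq_iff)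
  have h1: "\<forall>e\<in>E1. 1 \<in> e" unfolding E1_def by blast
  have h2: "\<forall>e\<in>E2. 1 \<notin> e" unfolding E2_def by auto
  have dis: "E1 \<inter> E2 = {}" using h1 h2 by blast
  have "card (E1 \<union> E2) = card E1 + card E2"
    by (rule card_Un_disjoint[OF _ _ dis]) (simp_all add: E1_def E2_def)
  moreover have "card (E1 \<union> E2) \<le> card (fan_E t)"
    by (rule card_mono[OF fin]) (use E1s E2s in auto)
  ultimately show "card (fan_E t) \<ge> 2*t-3" using c1 c2 assms by linarith
qed

lemma col_count:
  assumes "p \<ge> 2" "d \<ge> 3"
  shows "2*d - ((d-1) div p + 1) \<le> card (col p d ` wheel_E d)"
proof -
  define Um where "Um = {j\<in>{1..d}. (j-1) mod p \<noteq> 0}"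
  define Mk where "Mk = {j\<in>{1..d}. (j-1) mod p = 0}"
  have UM: "Um \<union> Mk = {1..d}" "Um \<inter> Mk = {}" unfolding Um_def Mk_def by auto
  have "card Um + card Mk = d"
  proof -
    have "finite Um" "finite Mk" unfolding Um_def Mk_def by auto
    then have "card (Um \<union> Mk) = card Um + card Mk" using card_Un_disjoint UM(2) by blast
    then show ?thesis using UM(1) by simp
  qed
  moreover have "card Mk \<le> (d-1) div p + 1" unfolding Mk_def using card_marked assms by simp
  ultimately have cU: "card Um \<ge> d - ((d-1) div p + 1)" by linarith
  have sub: "{1..d} \<union> (\<lambda>j. d + j) ` Um \<subseteq> col p d ` wheel_E d"
  proof
    fix x assume "x \<in> {1..d} \<union> (\<lambda>j. d + j) ` Um"
    then consider "x \<in> {1..d}" | j where "j \<in> Um" "x = d + j" by auto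
    then show "x \<in> col p d ` wheel_E d"
    proof cases
      case 1
      then have "{0,x} \<in> wheel_E d" by (intro wheel_spoke) auto
      moreover have "col p d {0,x} = x" using 1 by (simp add: col_spoke)
      ultimately show ?thesis by (metis image_eqI)
    next
      case 2
      then have j: "1 \<le> j" "j \<le> d" "(j-1) mod p \<noteq> 0" unfolding Um_def by auto
      then have "{j, j mod d + 1} \<in> wheel_E d" by (intro wheel_rim) auto
      moreover have "col p d {j, j mod d + 1} = x"
        using col_rim[OF assms(2) j(1) j(2), of p] j 2 by (simp add: rimcol_def)
      ultimately show ?thesis by (metis image_eqI)
    qed
  qed
  have "card ({1..d} \<union> (\<lambda>j. d + j) ` Um) = d + card Um"
  proof -
    have "card ({1..d} \<union> (\<lambda>j. d + j) ` Um) = card {1..d} + card ((\<lambda>j. d + j) ` Um)"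
      by (rule card_Un_disjoint) (auto simp: Um_def)
    also have "card ((\<lambda>j. d + j) ` Um) = card Um" by (rule card_image) simp
    finally show ?thesis by simp
  qed
  moreover have "card ({1..d} \<union> (\<lambda>j. d + j) ` Um) \<le> card (col p d ` wheel_E d)"
    by (rule card_mono[OF finite_imageI[OF wheel_fin] sub])
  ultimately show ?thesis using cU by linarith
qed

lemma no_rainbow:
  assumes t4: "t \<ge> 4" and d3: "d \<ge> 3" and pdef: "p = t - 2"
  shows "\<not> has_rainbow_copy (wheel_V d) (wheel_E d) (col p d) (fan_V t) (fan_E t)"
proof
  assume "has_rainbow_copy (wheel_V d) (wheel_E d) (col p d) (fan_V t) (fan_E t)"
  then obtain f where injf: "inj_on f {1..t}" and fV: "f ` {1..t} \<subseteq> {0..d}"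
    and fE: "\<forall>e\<in>fan_E t. f ` e \<in> wheel_E d"
    and rb: "inj_on (\<lambda>e. col p d (f ` e)) (fan_E t)"
    unfolding has_rainbow_copy_def fan_V_def wheel_V_def by blast
  let ?c = "col p d"
  let ?s = "\<lambda>j. j mod d + 1"
  define U where "U = f ` {1..t}"
  have cardU: "card U = t" unfolding U_def using card_image[OF injf] by simp
  have finU: "finite U" unfolding U_def by simp
  define S where "S = (\<lambda>e. f ` e) ` fan_E t"
  have inj1: "inj_on (\<lambda>e. f ` e) (fan_E t)"
    by (rule inj_onI) (metis (no_types, lifting) inj_onD rb)
  have cS: "card S \<ge> 2*t-3" unfolding S_def
    using card_image[OF inj1] fan_card[OF t4] by simp
  have injc: "inj_on ?c S"
  proof (rule inj_onI)
    fix x y assume "x \<in> S" "y \<in> S" "?c x = ?c y"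
    then obtain e1 e2 where e: "e1 \<in> fan_E t" "e2 \<in> fan_E t" "x = f ` e1" "y = f ` e2"
      unfolding S_def by blast
    have "col p d (f ` e1) = col p d (f ` e2)" using e \<open>?c x = ?c y\<close> by simp
    then have "e1 = e2" using inj_onD[OF rb _ e(1) e(2)] by simp
    then show "x = y" using e by simp
  qed
  have SU: "\<forall>s\<in>S. s \<subseteq> U" unfolding S_def U_def using fan_card(3)[OF t4] by auto
  have SW: "S \<subseteq> wheel_E d" unfolding S_def using fE by auto
  define A where "A = {i\<in>{1..d}. {0,i} \<in> S}"
  define J where "J = {j\<in>{1..d}. {j, ?s j} \<in> S}"
  have finA: "finite A" "finite J" unfolding A_def J_def by auto
  have Scov: "S \<subseteq> (\<lambda>i. {0,i}) ` A \<union> (\<lambda>j. {j, ?s j}) ` J"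
  proof
    fix s assume "s \<in> S"
    then have "s \<in> wheel_E d" using SW by auto
    then consider i where "1 \<le> i" "i \<le> d" "s = {0,i}" | j where "1 \<le> j" "j \<le> d" "s = {j, ?s j}"
      by (rule wheel_cases) blast+
    then show "s \<in> (\<lambda>i. {0,i}) ` A \<union> (\<lambda>j. {j, ?s j}) ` J"
    proof cases
      case 1
      then have "i \<in> A" unfolding A_def using \<open>s \<in> S\<close> by simp
      then show ?thesis using 1 by blast
    next
      case 2
      then have "j \<in> J" unfolding J_def using \<open>s \<in> S\<close> by simp
      then show ?thesis using 2 by blast
    qed
  qed
  have cAJ: "card S \<le> card A + card J"
  proof -
    have "card S \<le> card ((\<lambda>i. {0,i}) ` A \<union> (\<lambda>j. {j, ?s j}) ` J)"
      by (rule card_mono[OF _ Scov]) (simp add: finA)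
    also have "\<dots> \<le> card ((\<lambda>i. {0,i}) ` A) + card ((\<lambda>j. {j, ?s j}) ` J)"
      by (rule card_Un_le)
    also have "\<dots> \<le> card A + card J"
      using card_image_le[OF finA(1), of "\<lambda>i. {0,i}"] card_image_le[OF finA(2), of "\<lambda>j. {j, ?s j}"]
      by linarith
    finally show ?thesis .
  qed
  have JU: "J \<subseteq> U" "?s ` J \<subseteq> U" unfolding J_def using SU by auto
  have AU: "A \<subseteq> U" unfolding A_def using SU by auto
  show False
  proof (cases "0 \<in> U")
    case False
    then have "A = {}" unfolding A_def using SU by auto
    moreover have "card J \<le> t" using card_mono[OF finU JU(1)] cardU by simp
    ultimately show False using cAJ cS t4 by simp
  next
    case True
    define R where "R = U - {0}"
    have cR: "card R = t - 1" unfolding R_def using True cardU finU by simp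
    have finR: "finite R" unfolding R_def using finU by simp
    have R1d: "R \<subseteq> {1..d}" unfolding R_def U_def using fV by auto
    have A1: "A \<subseteq> {1..d}" "J \<subseteq> {1..d}" unfolding A_def J_def by blast+
    have s1: "?s ` J \<subseteq> {1..d}" using d3 by (auto simp: Suc_le_eq)
    have UR: "U \<inter> {1..d} \<subseteq> R" unfolding R_def by auto
    have AR: "A \<subseteq> R" using Int_greatest[OF AU A1(1)] UR by (rule subset_trans)
    have JR: "J \<subseteq> R" using Int_greatest[OF JU(1) A1(2)] UR by (rule subset_trans)
    have sJR: "?s ` J \<subseteq> R" using Int_greatest[OF JU(2) s1] UR by (rule subset_trans)
    define K where "K = A \<inter> J"
    have "card (A \<union> J) + card (A \<inter> J) = card A + card J"
      using card_Un_Int[OF finA(1) finA(2)] by simp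
    moreover have "card (A \<union> J) \<le> card R" using card_mono[OF finR] AR JR by simp
    ultimately have cK: "card K \<ge> t - 2" using cAJ cS cR t4 unfolding K_def by linarith
    have unm: "\<forall>j\<in>K. (j-1) mod p \<noteq> 0"
    proof
      fix j assume "j \<in> K"
      then have j: "j \<in> {1..d}" "{0,j} \<in> S" "{j, ?s j} \<in> S"
        unfolding K_def A_def J_def by auto
      show "(j-1) mod p \<noteq> 0"
      proof
        assume m: "(j-1) mod p = 0"
        have "?c {0,j} = j" using j by (simp add: col_spoke)
        moreover have "?c {j, ?s j} = j" using col_rim[OF d3, of j p] j m by (simp add: rimcol_def)
        ultimately have "{0,j} = {j, ?s j}" using injc j by (metis inj_onD)
        then show False using j by (auto simp: doubleton_eq_iff)
      qed
    qed
    show False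
    proof (rule glemma[OF _ finR R1d])
      show "p > 0" using pdef t4 by simp
      show "K \<subseteq> R" using AR unfolding K_def by auto
      show "?s ` K \<subseteq> R" using sJR unfolding K_def by auto
      show "card R \<le> card K + 1" using cR cK t4 by linarith
      show "card K \<ge> p" using cK pdef by simp
      show "\<forall>j\<in>K. (j-1) mod p \<noteq> 0" by (rule unm)
    qed
  qed
qed

theorem theorem4p1:
  fixes d t :: nat
  assumes "t \<ge> 4" and "d \<ge> t - 1"
  shows "rb (wheel_V d) (wheel_E d) (fan_V t) (fan_E t)
           \<ge> nat \<lfloor>(real (2 * t - 5) / real (t - 2)) * real d\<rfloor> + 1"
proof -
  define p where "p = t - 2"
  have p2: "p \<ge> 2" and d3: "d \<ge> 3" using assms unfolding p_def by auto
  define N where "N = nat \<lfloor>(real (2 * t - 5) / real (t - 2)) * real d\<rfloor>"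
  have NN: "N = ((2*p-1)*d) div p" unfolding N_def p_def using floor_eq[OF assms(1)] by simp
  have cc: "N \<le> card (col p d ` wheel_E d)"
    using col_count[OF p2 d3] arith_bound[OF p2, of d] d3 NN by linarith
  have nr: "\<not> has_rainbow_copy (wheel_V d) (wheel_E d) (col p d) (fan_V t) (fan_E t)"
    using no_rainbow[OF assms(1) d3] p_def by simp
  define P where "P = (\<lambda>k. \<forall>c :: nat set \<Rightarrow> nat.
       card (c ` wheel_E d) \<ge> k \<longrightarrow> has_rainbow_copy (wheel_V d) (wheel_E d) c (fan_V t) (fan_E t))"
  have ex: "P (card (wheel_E d) + 1)" unfolding P_def
  proof (intro allI impI)
    fix c :: "nat set \<Rightarrow> nat"
    assume "card (c ` wheel_E d) \<ge> card (wheel_E d) + 1"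
    moreover have "card (c ` wheel_E d) \<le> card (wheel_E d)" by (rule card_image_le[OF wheel_fin])
    ultimately show "has_rainbow_copy (wheel_V d) (wheel_E d) c (fan_V t) (fan_E t)" by simp
  qed
  have rbeq: "rb (wheel_V d) (wheel_E d) (fan_V t) (fan_E t) = (LEAST k. P k)"
    unfolding rb_def P_def by simp
  have "P (LEAST k. P k)" using ex by (rule LeastI)
  then have "N < (LEAST k. P k)"
  proof (rule contrapos_pp)
    assume "\<not> N < (LEAST k. P k)"
    then have "(LEAST k. P k) \<le> card (col p d ` wheel_E d)" using cc by linarith
    then show "\<not> P (LEAST k. P k)" using nr unfolding P_def by blast
  qed
  then show ?thesis unfolding rbeq N_def[symmetric] by simp
qed

end
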